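(* Let $\mathbb{C}_r$ be a robot configuration space with a distance function $d_r : \mathbb{C}_r \times \mathbb{C}_r \to \mathbb{R}^{\geq 0}$, let $\mathbb{B}$ be the space of virtual elastic bands with distance $d_b$, and assume the workspace is bounded, so that there is $D_{\max,b} > 0$ with $d_b(B_1,B_2) \le D_{\max,b}$ for all $B_1, B_2 \in \mathbb{B}$. On $\mathbb{C}_f = \mathbb{C}_r \times \mathbb{B}$ define $d_f$ by $d_f((q_r,B),(q_r',B'))^2 = d_r(q_r,q_r')^2 + \lambda_b\, d_b(B,B')^2$ for a fixed $\lambda_b > 0$. Let $\mathcal{V} \subset \mathbb{C}_f$ be a finite nonempty set and $q^{rand}_f = (q^{rand}_r, B^{rand}) \in \mathbb{C}_f$. Consider the procedure: (i) compute $D_{near,r}^2 = \min_{(q_r,B) \in \mathcal{V}} d_r(q^{rand}_r, q_r)^2$; (ii) set $D_{\max,f}^2 = D_{near,r}^2 + \lambda_b D_{\max,b}^2$; (iii) form $Q^{near}_f = \{ (q_r,B) \in \mathcal{V} : d_r(q_r, q^{rand}_r)^2 \le D_{\max,f}^2 \}$; (iv) return $\arg\min_{q_f \in Q^{near}_f} d_f(q_f, q^{rand}_f)$. Then this procedure is equivalent to a nearest neighbor search in the full configuration space, i.e. the returned element $q^{select}_f$ satisfies $d_f(q^{select}_f, q^{rand}_f) = \min_{q_f \in \mathcal{V}} d_f(q_f, q^{rand}_f)$.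
   Context: A virtual elastic band is a finite sequence of at most $N_b^{\max}$ points of the workspace $W \subset \mathbb{R}^3$. The band distance $d_b(B_1,B_2)$ is the Euclidean distance between the vectors in $\mathbb{R}^{3N_b^{\max}}$ formed by upsampling each band (by linear interpolation along the piecewise-linear curve through its points) to exactly $N_b^{\max}$ points. The workspace is bounded means there is $D_{\max,w}>0$ with $\|x-y\| \le D_{\max,w}$ for all $x,y \in W$, which guarantees the existence of the bound $D_{\max,b}$ on $d_b$. *)

theory Defs
  imports Main "HOL-Library.Library" Complex_Main
begin

definition d_f :: "('r \<Rightarrow> 'r \<Rightarrow> real) \<Rightarrow> ('b \<Rightarrow> 'b \<Rightarrow> real) \<Rightarrow> real
                   \<Rightarrow> 'r \<times> 'b \<Rightarrow> 'r \<times> 'b \<Rightarrow> real" where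
  "d_f dr db lam q q' = sqrt ((dr (fst q) (fst q'))\<^sup>2 + lam * (db (snd q) (snd q'))\<^sup>2)"

definition D_near_sq :: "('r \<Rightarrow> 'r \<Rightarrow> real) \<Rightarrow> ('r \<times> 'b) set \<Rightarrow> 'r \<times> 'b \<Rightarrow> real" where
  "D_near_sq dr V qrand = Min ((\<lambda>q. (dr (fst qrand) (fst q))\<^sup>2) ` V)"

definition D_max_f_sq :: "('r \<Rightarrow> 'r \<Rightarrow> real) \<Rightarrow> real \<Rightarrow> real \<Rightarrow> ('r \<times> 'b) set \<Rightarrow> 'r \<times> 'b \<Rightarrow> real" where
  "D_max_f_sq dr lam Dmaxb V qrand = D_near_sq dr V qrand + lam * Dmaxb\<^sup>2"

definition Q_near :: "('r \<Rightarrow> 'r \<Rightarrow> real) \<Rightarrow> real \<Rightarrow> real \<Rightarrow> ('r \<times> 'b) set \<Rightarrow> 'r \<times> 'b \<Rightarrow> ('r \<times> 'b) set" where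
  "Q_near dr lam Dmaxb V qrand =
     {q \<in> V. (dr (fst q) (fst qrand))\<^sup>2 \<le> D_max_f_sq dr lam Dmaxb V qrand}"

end

theory Submission
  imports Defs
begin

theorem lemma2:
  fixes dr :: "'r \<Rightarrow> 'r \<Rightarrow> real" and db :: "'b \<Rightarrow> 'b \<Rightarrow> real"
    and lam Dmaxb :: real and V :: "('r \<times> 'b) set" and qrand :: "'r \<times> 'b"
  assumes dr_nonneg: "\<And>x y. dr x y \<ge> 0"
    and dr_sym: "\<And>x y. dr x y = dr y x"
    and db_nonneg: "\<And>B1 B2. db B1 B2 \<ge> 0"
    and Dmaxb_pos: "Dmaxb > 0"
    and db_bound: "\<And>B1 B2. db B1 B2 \<le> Dmaxb"
    and lam_pos: "lam > 0"
    and V_fin: "finite V" and V_ne: "V \<noteq> {}"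
  shows "Q_near dr lam Dmaxb V qrand \<noteq> {} \<and>
         (\<forall>qsel. is_arg_min (\<lambda>q. d_f dr db lam q qrand) (\<lambda>q. q \<in> Q_near dr lam Dmaxb V qrand) qsel
            \<longrightarrow> d_f dr db lam qsel qrand = Min ((\<lambda>q. d_f dr db lam q qrand) ` V))"
proof -
  let ?g = "\<lambda>q. (dr (fst qrand) (fst q))\<^sup>2"
  let ?f = "\<lambda>q. d_f dr db lam q qrand"
  let ?Q = "Q_near dr lam Dmaxb V qrand"
  have fin1: "finite (?g ` V)" using V_fin by simp
  have "D_near_sq dr V qrand \<in> ?g ` V"
    using Min_in[OF fin1] V_ne unfolding D_near_sq_def by blast
  then obtain q0 where q0: "q0 \<in> V" "?g q0 = D_near_sq dr V qrand"
    unfolding image_iff by (elim bexE) (rule that, assumption, rule sym)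
  have gmin: "D_near_sq dr V qrand \<le> ?g q" if "q \<in> V" for q
    unfolding D_near_sq_def using fin1 that by simp
  have sq: "(?f q)\<^sup>2 = (dr (fst q) (fst qrand))\<^sup>2 + lam * (db (snd q) (snd qrand))\<^sup>2" for q
    unfolding d_f_def using lam_pos by (simp add: add_nonneg_nonneg)
  have fnn: "?f q \<ge> 0" for q unfolding d_f_def by (rule real_sqrt_ge_zero) (use lam_pos in auto)
  have dbsq: "(db x y)\<^sup>2 \<le> Dmaxb\<^sup>2" for x y
    by (rule power_mono[OF db_bound db_nonneg])
  have q0Q: "q0 \<in> ?Q"
  proof -
    have "lam * (db (snd q0) (snd qrand))\<^sup>2 \<ge> 0" using lam_pos by (intro mult_nonneg_nonneg) auto
    have "0 \<le> lam * Dmaxb\<^sup>2" using lam_pos by (intro mult_nonneg_nonneg) auto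
    moreover have "(dr (fst q0) (fst qrand))\<^sup>2 = D_near_sq dr V qrand"
      using q0(2) dr_sym[of "fst q0" "fst qrand"] by simp
    ultimately have "(dr (fst q0) (fst qrand))\<^sup>2 \<le> D_max_f_sq dr lam Dmaxb V qrand"
      unfolding D_max_f_sq_def by linarith
    then show ?thesis using q0(1) unfolding Q_near_def by blast
  qed
  have fin2: "finite (?f ` V)" using V_fin by simp
  have "Min (?f ` V) \<in> ?f ` V" using Min_in[OF fin2] V_ne by blast
  then obtain qm where qm: "qm \<in> V" "?f qm = Min (?f ` V)"
    unfolding image_iff by (elim bexE) (rule that, assumption, rule sym)
  have fmin: "Min (?f ` V) \<le> ?f q" if "q \<in> V" for q using fin2 that by simp
  have qmQ: "qm \<in> ?Q"
  proof -
    have "?f qm \<le> ?f q0" using fmin[OF q0(1)] qm(2) by simp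
    hence "(?f qm)\<^sup>2 \<le> (?f q0)\<^sup>2" by (rule power_mono[OF _ fnn])
    hence a: "(dr (fst qm) (fst qrand))\<^sup>2 + lam * (db (snd qm) (snd qrand))\<^sup>2
       \<le> (dr (fst q0) (fst qrand))\<^sup>2 + lam * (db (snd q0) (snd qrand))\<^sup>2" using sq by simp
    have b: "lam * (db (snd q0) (snd qrand))\<^sup>2 \<le> lam * Dmaxb\<^sup>2"
      using dbsq lam_pos by (intro mult_left_mono) auto
    have c: "lam * (db (snd qm) (snd qrand))\<^sup>2 \<ge> 0" using lam_pos by (intro mult_nonneg_nonneg) auto
    have "(dr (fst q0) (fst qrand))\<^sup>2 = D_near_sq dr V qrand"
      using q0 dr_sym[of "fst q0" "fst qrand"] by simp
    then have "(dr (fst qm) (fst qrand))\<^sup>2 \<le> D_max_f_sq dr lam Dmaxb V qrand"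
      using a b c unfolding D_max_f_sq_def by linarith
    then show ?thesis using qm(1) unfolding Q_near_def by blast
  qed
  have QV: "?Q \<subseteq> V" unfolding Q_near_def by auto
  show ?thesis
  proof (intro conjI allI impI)
    show "?Q \<noteq> {}" using q0Q by auto
  next
    fix qsel assume h: "is_arg_min ?f (\<lambda>q. q \<in> ?Q) qsel"
    hence s: "qsel \<in> ?Q" "\<And>y. y \<in> ?Q \<Longrightarrow> \<not> ?f y < ?f qsel"
      unfolding is_arg_min_def by auto
    have "?f qsel \<le> ?f qm" using s(2)[OF qmQ] by simp
    moreover have "Min (?f ` V) \<le> ?f qsel" using fmin[of qsel] s(1) QV by blast
    ultimately show "?f qsel = Min (?f ` V)" using qm by simp
  qed
qed

end
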